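(* Let $G<\mathrm{Aut}(\mathbf{T})$ be finitely generated and fix a generating $n$-tuple $S\in\Gamma_n(G)$. Suppose $G$ acts transitively on every level $\{0,1\}^m$ of $\mathbf{T}$. Suppose there is a constant $\alpha$ such that for every $m\ge1$ there exist a string $s\in\{0,1\}^m$ and a nontrivial element $g\in\mathrm{Rist}_G(s)$ with $\ell_S(g)\le\alpha 2^m$. Then $\Gamma_k(G,S)$ has exponential growth for every $k\ge n+2$.
   Context: $\mathbf{T}=\{0,1\}^*$ is the rooted binary tree of finite binary strings (root the empty string, children of $s$ being $s0,s1$), and $\mathrm{Aut}(\mathbf{T})$ is its automorphism group (length-preserving bijections $g$ of strings such that $g(st)$ begins with $g(s)$). For $s\in\{0,1\}^m$, $\mathrm{Rist}(s)$ is the subgroup of elements of $\mathrm{Aut}(\mathbf{T})$ fixing every string that does not begin with $s$, and $\mathrm{Rist}_G(s)=G\cap\mathrm{Rist}(s)$. $\ell_S(g)$ denotes the word length of $g$ with respect to the entries of $S$ and their inverses. For a group $G$, a generating $n$-tuple is $(g_1,\dots,g_n)\in G^n$ generating $G$; the product replacement graph $\Gamma_n(G)$ has vertices the generating $n$-tuples, with edges from $(g_1,\dots,g_n)$ to each tuple obtained by replacing $g_j$ by $g_jg_i^{\pm1}$ or $g_i^{\pm1}g_j$, for every ordered pair $i\neq j$. For $S=(g_1,\dots,g_n)$ and $k\ge n$, $\Gamma_k(G,S)$ is the connected component of $\Gamma_k(G)$ containing $(g_1,\dots,g_n,1,\dots,1)$. A connected graph has exponential growth if for some vertex $v$ there is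 $\beta>1$ such that the number of vertices at distance at most $r$ from $v$ is at least $\beta^r$ for all sufficiently large $r$. *)

theory Defs
  imports Complex_Main "HOL-Library.Sublist"
begin

text \<open>Vertices of the binary tree T are finite binary strings (bool list);
  automorphisms are functions on strings, group product is composition.\<close>

type_synonym tree_map = "bool list \<Rightarrow> bool list"

definition tree_aut :: "tree_map \<Rightarrow> bool" where
  "tree_aut g \<longleftrightarrow> bij g \<and> (\<forall>s. length (g s) = length s)
                   \<and> (\<forall>s t. prefix (g s) (g (s @ t)))"

definition tree_subgroup :: "tree_map set \<Rightarrow> bool" where
  "tree_subgroup G \<longleftrightarrow> G \<subseteq> {g. tree_aut g} \<and> id \<in> G
      \<and> (\<forall>g\<in>G. \<forall>h\<in>G. g \<circ> h \<in> G) \<and> (\<forall>g\<in>G. inv g \<in> G)"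

definition gen_by :: "tree_map set \<Rightarrow> tree_map set" where
  "gen_by A = {foldr (\<circ>) w id | w. set w \<subseteq> A \<union> inv ` A}"

definition gen_tuple :: "tree_map set \<Rightarrow> tree_map list \<Rightarrow> bool" where
  "gen_tuple G u \<longleftrightarrow> set u \<subseteq> G \<and> gen_by (set u) = G"

definition word_length :: "tree_map list \<Rightarrow> tree_map \<Rightarrow> nat" where
  "word_length S g = (LEAST k. \<exists>w. length w = k \<and> set w \<subseteq> set S \<union> inv ` set S
                                   \<and> foldr (\<circ>) w id = g)"

definition rist :: "tree_map set \<Rightarrow> bool list \<Rightarrow> tree_map set" where
  "rist G s = {g \<in> G. \<forall>t. \<not> prefix s t \<longrightarrow> g t = t}"

definition pr_move :: "tree_map list \<Rightarrow> tree_map list \<Rightarrow> bool" where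
  "pr_move u v \<longleftrightarrow> (\<exists>i j. i < length u \<and> j < length u \<and> i \<noteq> j \<and>
      (v = u[j := u!j \<circ> u!i] \<or> v = u[j := u!j \<circ> inv (u!i)]
     \<or> v = u[j := u!i \<circ> u!j] \<or> v = u[j := inv (u!i) \<circ> u!j]))"

definition pr_edge :: "tree_map set \<Rightarrow> nat \<Rightarrow> tree_map list \<Rightarrow> tree_map list \<Rightarrow> bool" where
  "pr_edge G k u v \<longleftrightarrow> length u = k \<and> length v = k \<and> gen_tuple G u \<and> gen_tuple G v
      \<and> pr_move u v"

text \<open>Vertex set of Gamma_k(G,S): component containing (S,1,...,1).\<close>
definition pr_component :: "tree_map set \<Rightarrow> tree_map list \<Rightarrow> nat \<Rightarrow> tree_map list set" where
  "pr_component G S k = {u. (pr_edge G k)\<^sup>*\<^sup>* (S @ replicate (k - length S) id) u}"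

definition pr_ball :: "tree_map set \<Rightarrow> nat \<Rightarrow> tree_map list \<Rightarrow> nat \<Rightarrow> tree_map list set" where
  "pr_ball G k v r = {u. \<exists>i\<le>r. (pr_edge G k ^^ i) v u}"

definition pr_exp_growth :: "tree_map set \<Rightarrow> tree_map list \<Rightarrow> nat \<Rightarrow> bool" where
  "pr_exp_growth G S k \<longleftrightarrow> (\<exists>v\<in>pr_component G S k. \<exists>\<beta>::real. \<beta> > 1 \<and>
      (\<exists>R. \<forall>r\<ge>R. \<beta> ^ r \<le> real (card (pr_ball G k v r))))"

end

theory Submission
  imports Defs
begin



lemma ta_len: "tree_aut g \<Longrightarrow> length (g s) = length s"
  by (simp add: tree_aut_def)

lemma ta_bij: "tree_aut g \<Longrightarrow> bij g"
  by (simp add: tree_aut_def)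

lemma ta_prefix: assumes "tree_aut g" "prefix s t" shows "prefix (g s) (g t)"
proof -
  from assms(2) obtain u where "t = s @ u" by (auto simp: prefix_def)
  thus ?thesis using assms(1) by (simp add: tree_aut_def)
qed

lemma ta_inv_cancel: "tree_aut g \<Longrightarrow> g (inv g t) = t"
  by (meson bij_inv_eq_iff ta_bij)

lemma ta_inv_cancel2: "tree_aut g \<Longrightarrow> inv g (g t) = t"
  by (meson bij_def inv_f_f ta_bij)

lemma prefix_same_len: "prefix a z \<Longrightarrow> prefix b z \<Longrightarrow> length a = length b \<Longrightarrow> a = b"
  by (metis prefix_length_prefix prefix_order.antisym order_refl)

lemma prefix_same_len2: "prefix a b \<Longrightarrow> length a = length b \<Longrightarrow> a = b"
  by (metis prefix_length_prefix prefix_order.antisym order_refl prefix_order.refl)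

lemma ta_fix_last:
  assumes "tree_aut y" "length v = m" "\<forall>t. length t = m \<and> t \<noteq> v \<longrightarrow> y t = t"
  shows "y v = v"
proof (rule ccontr)
  assume "y v \<noteq> v"
  moreover have "length (y v) = m" using assms ta_len by auto
  ultimately have "y (y v) = y v" using assms(3) by auto
  hence "y v = v" using ta_bij[OF assms(1)] by (meson bij_def injD)
  thus False using \<open>y v \<noteq> v\<close> by simp
qed

lemma walk_exists:
  fixes R :: "'a \<Rightarrow> 'a \<Rightarrow> bool"
  assumes fin: "finite V" and sV: "s \<in> V" and sym: "\<And>a b. R a b \<Longrightarrow> R b a"
    and cl: "\<And>a b. a \<in> V \<Longrightarrow> R a b \<Longrightarrow> b \<in> V"
    and conn: "\<And>t. t \<in> V \<Longrightarrow> R\<^sup>*\<^sup>* s t"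
  shows "\<exists>ws. successively R (s # ws) \<and> set (s # ws) = V \<and> length ws \<le> 2 * (card V - 1)"
proof -
  have main: "\<forall>N. 1 \<le> N \<and> N \<le> card V \<longrightarrow> (\<exists>ws. successively R (s # ws) \<and> set (s # ws) \<subseteq> V
       \<and> N \<le> card (set (s # ws)) \<and> length ws \<le> 2 * (N - 1))"
  proof (intro allI impI)
    fix N :: nat assume "1 \<le> N \<and> N \<le> card V"
    thus "\<exists>ws. successively R (s # ws) \<and> set (s # ws) \<subseteq> V
       \<and> N \<le> card (set (s # ws)) \<and> length ws \<le> 2 * (N - 1)"
    proof (induction N)
      case 0 thus ?case by simp
    next
      case (Suc N)
      show ?case
      proof (cases "N = 0")
        case True thus ?thesis using sV by (intro exI[of _ "[]"]) auto
      next
        case False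
        then obtain ws where ws: "successively R (s # ws)" "set (s # ws) \<subseteq> V"
          "N \<le> card (set (s # ws))" "length ws \<le> 2 * (N - 1)"
          using Suc by auto
        show ?thesis
        proof (cases "Suc N \<le> card (set (s # ws))")
          case True thus ?thesis using ws by (intro exI[of _ ws]) auto
        next
          case False
          let ?U = "set (s # ws)"
          have cU: "card ?U < card V" using False Suc.prems ws(3) by linarith
          have "\<exists>u w. u \<in> ?U \<and> R u w \<and> w \<notin> ?U"
          proof (rule ccontr)
            assume nc: "\<not> ?thesis"
            have "\<And>t. R\<^sup>*\<^sup>* s t \<Longrightarrow> t \<in> ?U"
            proof -
              fix t assume "R\<^sup>*\<^sup>* s t"
              thus "t \<in> ?U"
                by (induction rule: rtranclp_induct) (use nc in auto)
            qed
            hence "V \<subseteq> ?U" using conn by auto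
            hence "card V \<le> card ?U" by (simp add: card_mono)
            thus False using cU by simp
          qed
          then obtain u w where uw: "u \<in> ?U" "R u w" "w \<notin> ?U" by blast
          then obtain p q where pq: "s # ws = p @ u # q" by (meson split_list)
          define ws' where "ws' = tl (p @ u # w # u # q)"
          have hd': "s # ws' = p @ u # w # u # q"
            using pq unfolding ws'_def by (cases p) auto
          have wV: "w \<in> V" using cl uw ws(2) by auto
          have succ: "successively R (s # ws')"
            unfolding hd' using ws(1) uw(2) sym[OF uw(2)] unfolding pq
            by (auto simp: successively_append_iff successively_Cons)
          have setw: "set (s # ws') = insert w ?U" unfolding hd' pq by auto
          have "length (s # ws') = length (s # ws) + 2" unfolding hd' pq by simp
          hence len: "length ws' = length ws + 2" by simp
          have fU: "finite ?U" by simp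
          show ?thesis
            apply (intro exI[of _ ws'])
            using succ setw wV ws len uw(3) fU False \<open>N \<noteq> 0\<close>
            by (auto simp: card_insert_if)
        qed
      qed
    qed
  qed
  have "card V \<ge> 1" using fin sV by (metis One_nat_def Suc_leI card_gt_0_iff empty_iff)
  then obtain ws where ws: "successively R (s # ws)" "set (s # ws) \<subseteq> V"
       "card V \<le> card (set (s # ws))" "length ws \<le> 2 * (card V - 1)"
    using main by blast
  have "set (s # ws) = V" using ws(2,3) fin by (simp add: card_seteq)
  thus ?thesis using ws by blast
qed




lemma gen_by_mono: "A \<subseteq> B \<Longrightarrow> gen_by A \<subseteq> gen_by B"
  unfolding gen_by_def by blast

lemma foldr_in_G:
  assumes "tree_subgroup G" "set w \<subseteq> G" shows "foldr (\<circ>) w id \<in> G"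
  using assms(2) by (induction w) (use assms(1) in \<open>auto simp: tree_subgroup_def\<close>)

lemma gen_by_sub: assumes "tree_subgroup G" "A \<subseteq> G" shows "gen_by A \<subseteq> G"
proof
  fix g assume "g \<in> gen_by A"
  then obtain w where w: "g = foldr (\<circ>) w id" "set w \<subseteq> A \<union> inv ` A" unfolding gen_by_def by blast
  have "set w \<subseteq> G" using w(2) assms unfolding tree_subgroup_def by blast
  thus "g \<in> G" using foldr_in_G[OF assms(1)] w(1) by simp
qed

locale ctx =
  fixes G :: "tree_map set" and S :: "tree_map list" and n k :: nat
  assumes sub: "tree_subgroup G" and lenS: "length S = n" and gen: "gen_tuple G S"
    and kge: "n + 2 \<le> k"
begin

definition T :: "tree_map \<Rightarrow> tree_map \<Rightarrow> tree_map list" where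
  "T x y = S @ [x, y] @ replicate (k - n - 2) id"

abbreviation E where "E \<equiv> pr_edge G k"

definition wthn :: "nat \<Rightarrow> tree_map list \<Rightarrow> tree_map list \<Rightarrow> bool" where
  "wthn d u v \<longleftrightarrow> (\<exists>i\<le>d. (E ^^ i) u v)"

definition L :: "tree_map set" where "L = set S \<union> inv ` set S"

lemma G_aut: "g \<in> G \<Longrightarrow> tree_aut g" using sub unfolding tree_subgroup_def by blast
lemma G_comp: "g \<in> G \<Longrightarrow> h \<in> G \<Longrightarrow> g \<circ> h \<in> G" using sub unfolding tree_subgroup_def by blast
lemma G_inv: "g \<in> G \<Longrightarrow> inv g \<in> G" using sub unfolding tree_subgroup_def by blast
lemma G_id: "id \<in> G" using sub unfolding tree_subgroup_def by blast
lemma S_G: "set S \<subseteq> G" using gen unfolding gen_tuple_def by blast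
lemma L_G: "c \<in> L \<Longrightarrow> c \<in> G" using S_G G_inv unfolding L_def by blast
lemma L_inv: "c \<in> L \<Longrightarrow> inv c \<in> L"
proof -
  assume "c \<in> L"
  then consider "c \<in> set S" | s where "s \<in> set S" "c = inv s" unfolding L_def by blast
  thus "inv c \<in> L"
  proof cases
    case 1 thus ?thesis unfolding L_def by blast
  next
    case 2
    have "bij s" using 2 S_G G_aut ta_bij by blast
    hence "inv c = s" using 2 by (simp add: inv_inv_eq)
    thus ?thesis using 2 unfolding L_def by blast
  qed
qed

lemma len_T: "length (T x y) = k" using kge lenS unfolding T_def by simp

lemma gen_T: assumes "x \<in> G" "y \<in> G" shows "gen_tuple G (T x y)"
proof -
  have s1: "set (T x y) \<subseteq> G" using assms S_G G_id unfolding T_def by auto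
  have "G = gen_by (set S)" using gen unfolding gen_tuple_def by simp
  also have "\<dots> \<subseteq> gen_by (set (T x y))" by (rule gen_by_mono) (auto simp: T_def)
  finally show ?thesis using gen_by_sub[OF sub s1] s1 unfolding gen_tuple_def by blast
qed

lemma T_nth_x: "T x y ! n = x" unfolding T_def using lenS by (simp add: nth_append)
lemma T_nth_y: "T x y ! (Suc n) = y" unfolding T_def using lenS by (simp add: nth_append)
lemma T_nth_S: "i < n \<Longrightarrow> T x y ! i = S ! i" unfolding T_def using lenS by (simp add: nth_append)
lemma T_upd_x: "(T x y)[n := z] = T z y" unfolding T_def using lenS by (simp add: list_update_append)
lemma T_upd_y: "(T x y)[Suc n := z] = T x z" unfolding T_def using lenS by (simp add: list_update_append)

lemma edgeI: "x \<in> G \<Longrightarrow> y \<in> G \<Longrightarrow> x' \<in> G \<Longrightarrow> y' \<in> G \<Longrightarrow> pr_move (T x y) (T x' y')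
   \<Longrightarrow> E (T x y) (T x' y')"
  unfolding pr_edge_def using len_T gen_T by blast

lemma mv_right: assumes "x \<in> G" "y \<in> G" "c \<in> L" shows "E (T x y) (T x (y \<circ> c))"
proof (rule edgeI)
  show "x \<in> G" "y \<in> G" "x \<in> G" by fact+
  show "y \<circ> c \<in> G" using assms G_comp L_G by blast
  from assms(3) consider i where "i < n" "c = S ! i" | i where "i < n" "c = inv (S ! i)"
    unfolding L_def using lenS by (auto simp: in_set_conv_nth)
  thus "pr_move (T x y) (T x (y \<circ> c))"
  proof cases
    case 1
    thus ?thesis unfolding pr_move_def using len_T kge
      by (intro exI[of _ i] exI[of _ "Suc n"]) (auto simp: T_nth_y T_nth_S T_upd_y)
  next
    case 2
    thus ?thesis unfolding pr_move_def using len_T kge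
      by (intro exI[of _ i] exI[of _ "Suc n"]) (auto simp: T_nth_y T_nth_S T_upd_y)
  qed
qed

lemma mv_left: assumes "x \<in> G" "y \<in> G" "c \<in> L" shows "E (T x y) (T x (c \<circ> y))"
proof (rule edgeI)
  show "x \<in> G" "y \<in> G" "x \<in> G" by fact+
  show "c \<circ> y \<in> G" using assms G_comp L_G by blast
  from assms(3) consider i where "i < n" "c = S ! i" | i where "i < n" "c = inv (S ! i)"
    unfolding L_def using lenS by (auto simp: in_set_conv_nth)
  thus "pr_move (T x y) (T x (c \<circ> y))"
  proof cases
    case 1
    thus ?thesis unfolding pr_move_def using len_T kge
      by (intro exI[of _ i] exI[of _ "Suc n"]) (auto simp: T_nth_y T_nth_S T_upd_y)
  next
    case 2
    thus ?thesis unfolding pr_move_def using len_T kge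
      by (intro exI[of _ i] exI[of _ "Suc n"]) (auto simp: T_nth_y T_nth_S T_upd_y)
  qed
qed

lemma mv_mul: assumes "x \<in> G" "y \<in> G" shows "E (T x y) (T (y \<circ> x) y)"
proof (rule edgeI)
  show "x \<in> G" "y \<in> G" "y \<in> G" by fact+
  show "y \<circ> x \<in> G" using assms G_comp by blast
  show "pr_move (T x y) (T (y \<circ> x) y)" unfolding pr_move_def using len_T kge
      by (intro exI[of _ "Suc n"] exI[of _ n]) (auto simp: T_nth_y T_nth_x T_upd_x)
qed

lemma wthn_refl: "wthn d u u" unfolding wthn_def by (intro exI[of _ 0]) auto
lemma wthn_edge: "E u v \<Longrightarrow> wthn 1 u v" unfolding wthn_def by (intro exI[of _ 1]) auto
lemma wthn_trans: "wthn a u v \<Longrightarrow> wthn b v w \<Longrightarrow> wthn (a + b) u w"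
proof -
  assume "wthn a u v" "wthn b v w"
  then obtain i j where "i \<le> a" "(E ^^ i) u v" "j \<le> b" "(E ^^ j) v w" unfolding wthn_def by blast
  hence "(E ^^ (i + j)) u w" by (auto simp: relpowp_add)
  thus ?thesis unfolding wthn_def using \<open>i \<le> a\<close> \<open>j \<le> b\<close> by (intro exI[of _ "i+j"]) auto
qed
lemma wthn_mono: "wthn a u v \<Longrightarrow> a \<le> b \<Longrightarrow> wthn b u v"
  unfolding wthn_def using order_trans by blast

lemma build_word:
  assumes "x \<in> G" "y \<in> G" "set w \<subseteq> L"
  shows "wthn (length w) (T x y) (T x (y \<circ> foldr (\<circ>) w id))"
  using assms(2,3)
proof (induction w arbitrary: y)
  case Nil thus ?case by (simp add: wthn_refl)
next
  case (Cons a w)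
  have a: "a \<in> L" using Cons by simp
  have y': "y \<circ> a \<in> G" using Cons.prems a L_G G_comp by blast
  have "wthn 1 (T x y) (T x (y \<circ> a))" using mv_right[OF assms(1) Cons.prems(1) a] by (rule wthn_edge)
  moreover have "set w \<subseteq> L" using Cons.prems(2) by simp
  note IH = Cons.IH[OF y' this]
  from wthn_trans[OF calculation(1) IH] show ?case by (simp add: comp_assoc)
qed

lemma conj_move:
  assumes "x \<in> G" "y \<in> G" "c \<in> L"
  shows "wthn 2 (T x y) (T x (c \<circ> y \<circ> inv c))"
proof -
  have "E (T x y) (T x (c \<circ> y))" by (rule mv_left[OF assms])
  moreover have "E (T x (c \<circ> y)) (T x (c \<circ> y \<circ> inv c))"
    using mv_right[OF assms(1) _ L_inv[OF assms(3)], of "c \<circ> y"] assms G_comp L_G by (simp add: comp_assoc)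
  ultimately have "wthn (1 + 1) (T x y) (T x (c \<circ> y \<circ> inv c))"
    by (intro wthn_trans[OF wthn_edge wthn_edge])
  thus ?thesis by (simp add: numeral_2_eq_2)
qed

end



context ctx begin

definition good :: "nat \<Rightarrow> tree_map \<Rightarrow> bool list set \<Rightarrow> bool" where
  "good m x B \<longleftrightarrow> x \<in> G \<and> (\<forall>t. length t = m \<longrightarrow> x t = t) \<and>
     (\<forall>v. length v = m \<longrightarrow> ((\<exists>t. prefix v t \<and> x t \<noteq> t) \<longleftrightarrow> v \<in> B))"

lemma good_id: "good m id {}" unfolding good_def using G_id by auto

lemma rist_fix:
  assumes "y \<in> rist G v" "length v = m" "length t = m" shows "y t = t"
proof -
  have yG: "tree_aut y" using assms(1) G_aut unfolding rist_def by blast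
  have all: "\<forall>t. length t = m \<and> t \<noteq> v \<longrightarrow> y t = t"
  proof (intro allI impI)
    fix t assume "length t = m \<and> t \<noteq> v"
    hence "\<not> prefix v t" using assms(2) prefix_same_len2 by metis
    thus "y t = t" using assms(1) unfolding rist_def by blast
  qed
  show ?thesis
  proof (cases "t = v")
    case True thus ?thesis using ta_fix_last[OF yG assms(2) all] by simp
  next
    case False thus ?thesis using all assms(3) by blast
  qed
qed

lemma good_mul:
  assumes g: "good m x B" and y: "y \<in> rist G v" "y \<noteq> id" and v: "length v = m" "v \<notin> B"
  shows "good m (y \<circ> x) (insert v B)"
proof -
  have xG: "x \<in> G" and xfix: "\<And>t. length t = m \<Longrightarrow> x t = t"
    and xD: "\<And>v. length v = m \<Longrightarrow> ((\<exists>t. prefix v t \<and> x t \<noteq> t) \<longleftrightarrow> v \<in> B)"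
    using g unfolding good_def by blast+
  have yG: "y \<in> G" and yr: "\<And>t. \<not> prefix v t \<Longrightarrow> y t = t" using y unfolding rist_def by blast+
  have xa: "tree_aut x" using xG G_aut by blast
  have c1: "y \<circ> x \<in> G" using xG yG G_comp by blast
  have c2: "\<forall>t. length t = m \<longrightarrow> (y \<circ> x) t = t" using xfix rist_fix[OF y(1) v(1)] by simp
  have c3: "((\<exists>t. prefix v' t \<and> (y \<circ> x) t \<noteq> t) \<longleftrightarrow> v' \<in> insert v B)" if lv': "length v' = m" for v'
  proof (cases "v' = v")
    case True
    have xt: "\<And>t. prefix v t \<Longrightarrow> x t = t" using xD[OF v(1)] v(2) by blast
    obtain t0 where t0: "y t0 \<noteq> t0" using y(2) by (metis eq_id_iff)
    have "prefix v t0" using t0 yr by blast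
    hence "prefix v t0 \<and> (y \<circ> x) t0 \<noteq> t0" using xt t0 by simp
    thus ?thesis using True by blast
  next
    case False
    have "(y \<circ> x) t = x t" if "prefix v' t" for t
    proof -
      have "prefix (x v') (x t)" using ta_prefix[OF xa that] .
      hence pv': "prefix v' (x t)" using xfix[OF lv'] by simp
      have "\<not> prefix v (x t)"
      proof
        assume "prefix v (x t)"
        hence "v = v'" using pv' prefix_same_len v(1) lv' by metis
        thus False using False by simp
      qed
      thus ?thesis using yr by simp
    qed
    hence "(\<exists>t. prefix v' t \<and> (y \<circ> x) t \<noteq> t) \<longleftrightarrow> (\<exists>t. prefix v' t \<and> x t \<noteq> t)" by metis
    thus ?thesis using xD[OF lv'] False by blast
  qed
  show ?thesis unfolding good_def using c1 c2 c3 by blast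
qed

lemma conj_rist:
  assumes y: "y \<in> rist G v" "y \<noteq> id" and c: "c \<in> L"
  shows "c \<circ> y \<circ> inv c \<in> rist G (c v)" "c \<circ> y \<circ> inv c \<noteq> id"
proof -
  have ca: "tree_aut c" using c L_G G_aut by blast
  have yG: "y \<in> G" and yr: "\<And>t. \<not> prefix v t \<Longrightarrow> y t = t" using y unfolding rist_def by blast+
  have inG: "c \<circ> y \<circ> inv c \<in> G" using yG L_G[OF c] L_G[OF L_inv[OF c]] G_comp by blast
  have "(c \<circ> y \<circ> inv c) t = t" if "\<not> prefix (c v) t" for t
  proof -
    have "\<not> prefix v (inv c t)"
    proof
      assume "prefix v (inv c t)"
      hence "prefix (c v) (c (inv c t))" by (rule ta_prefix[OF ca])
      thus False using that ta_inv_cancel[OF ca] by simp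
    qed
    thus ?thesis using yr ta_inv_cancel[OF ca] by simp
  qed
  thus "c \<circ> y \<circ> inv c \<in> rist G (c v)" using inG unfolding rist_def by blast
  show "c \<circ> y \<circ> inv c \<noteq> id"
  proof
    assume h: "c \<circ> y \<circ> inv c = id"
    have "y = id"
    proof
      fix t
      have "(c \<circ> y \<circ> inv c) (c t) = c t" using h by simp
      hence "c (y t) = c t" using ta_inv_cancel2[OF ca] by simp
      thus "y t = id t" using ta_bij[OF ca] by (simp add: bij_def inj_eq)
    qed
    thus False using y(2) by simp
  qed
qed

definition R :: "bool list \<Rightarrow> bool list \<Rightarrow> bool" where
  "R a b \<longleftrightarrow> (\<exists>c\<in>L. b = c a)"

lemma process:
  assumes "successively R (v # ws)" "good m x B" "y \<in> rist G v" "y \<noteq> id" "length v = m"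
  shows "\<exists>x' y'. wthn (3 * length ws + 1) (T x y) (T x' y') \<and> good m x' (B \<union> (A \<inter> set (v # ws)))"
  using assms
proof (induction ws arbitrary: v x y B)
  case Nil
  have xG: "x \<in> G" using Nil.prems(2) unfolding good_def by blast
  have yG: "y \<in> G" using Nil.prems(3) unfolding rist_def by blast
  show ?case
  proof (cases "v \<in> A \<and> v \<notin> B")
    case True
    have "good m (y \<circ> x) (insert v B)" using good_mul Nil.prems True by blast
    moreover have "wthn 1 (T x y) (T (y \<circ> x) y)" using mv_mul[OF xG yG] by (rule wthn_edge)
    moreover have "insert v B = B \<union> (A \<inter> set [v])" using True by auto
    ultimately show ?thesis by (metis One_nat_def list.size(3) mult_0_right add_0)
  next
    case False
    hence "B \<union> (A \<inter> set [v]) = B" by auto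
    thus ?thesis using Nil.prems(2) wthn_refl by (metis list.size(3))
  qed
next
  case (Cons w ws)
  have xG: "x \<in> G" using Cons.prems(2) unfolding good_def by blast
  have yG: "y \<in> G" using Cons.prems(3) unfolding rist_def by blast
  obtain x1 B1 where s1: "wthn 1 (T x y) (T x1 y)" "good m x1 B1" "B1 = B \<union> (A \<inter> {v})"
  proof (cases "v \<in> A \<and> v \<notin> B")
    case True
    have "good m (y \<circ> x) (insert v B)" using good_mul Cons.prems True by blast
    moreover have "wthn 1 (T x y) (T (y \<circ> x) y)" using mv_mul[OF xG yG] by (rule wthn_edge)
    ultimately show ?thesis using True that by auto
  next
    case False
    hence "B \<union> (A \<inter> {v}) = B" by auto
    thus ?thesis using Cons.prems(2) wthn_refl[of 1 "T x y"] that by metis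
  qed
  have x1G: "x1 \<in> G" using s1(2) unfolding good_def by blast
  obtain c where c: "c \<in> L" "w = c v" using Cons.prems(1) unfolding R_def by auto
  have y2: "c \<circ> y \<circ> inv c \<in> rist G w" "c \<circ> y \<circ> inv c \<noteq> id"
    using conj_rist[OF Cons.prems(3,4) c(1)] c(2) by auto
  have lw: "length w = m" using c L_G G_aut ta_len Cons.prems(5) by metis
  have s2: "wthn 2 (T x1 y) (T x1 (c \<circ> y \<circ> inv c))" by (rule conj_move[OF x1G yG c(1)])
  have sw: "successively R (w # ws)" using Cons.prems(1) by simp
  obtain x' y' where IH: "wthn (3 * length ws + 1) (T x1 (c \<circ> y \<circ> inv c)) (T x' y')"
      "good m x' (B1 \<union> (A \<inter> set (w # ws)))"
    using Cons.IH[OF sw s1(2) y2 lw] by blast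
  have "wthn (1 + 2 + (3 * length ws + 1)) (T x y) (T x' y')"
    using wthn_trans[OF wthn_trans[OF s1(1) s2] IH(1)] .
  moreover have "3 * length (w # ws) + 1 = 1 + 2 + (3 * length ws + 1)" by simp
  moreover have "B1 \<union> (A \<inter> set (w # ws)) = B \<union> (A \<inter> set (v # w # ws))" using s1(3) by auto
  ultimately show ?case using IH(2) by metis
qed

end



lemma pr_move_finite: "finite {v. pr_move u v}"
proof -
  let ?F = "\<Union>i\<in>{..<length u}. \<Union>j\<in>{..<length u}.
     {u[j := u!j \<circ> u!i], u[j := u!j \<circ> inv (u!i)], u[j := u!i \<circ> u!j], u[j := inv (u!i) \<circ> u!j]}"
  have "{v. pr_move u v} \<subseteq> ?F" unfolding pr_move_def by blast
  moreover have "finite ?F" by simp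
  ultimately show ?thesis by (rule finite_subset)
qed

lemma ball_finite: "finite (pr_ball G k u r)"
proof -
  have lv: "finite {w. (pr_edge G k ^^ i) u w}" for i
  proof (induction i)
    case 0 thus ?case by simp
  next
    case (Suc i)
    have "{w. (pr_edge G k ^^ Suc i) u w} \<subseteq> (\<Union>w'\<in>{w. (pr_edge G k ^^ i) u w}. {v. pr_move w' v})"
      unfolding pr_edge_def by auto
    moreover have "finite (\<Union>w'\<in>{w. (pr_edge G k ^^ i) u w}. {v. pr_move w' v})"
      using Suc pr_move_finite by blast
    ultimately show ?case by (rule finite_subset)
  qed
  have "pr_ball G k u r = (\<Union>i\<in>{..r}. {w. (pr_edge G k ^^ i) u w})" unfolding pr_ball_def by auto
  thus ?thesis using lv by simp
qed

lemma ball_mono: "r \<le> r' \<Longrightarrow> pr_ball G k u r \<subseteq> pr_ball G k u r'"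
  unfolding pr_ball_def using le_trans by blast

context ctx begin

lemma ball_wthn: "pr_ball G k u d = {v. wthn d u v}" unfolding pr_ball_def wthn_def by simp

lemma word_exists: assumes "g \<in> G" shows "\<exists>w. set w \<subseteq> L \<and> foldr (\<circ>) w id = g"
  using assms gen unfolding gen_tuple_def gen_by_def L_def by blast

lemma word_reach: "set w \<subseteq> L \<Longrightarrow> R\<^sup>*\<^sup>* s (foldr (\<circ>) w id s)"
proof (induction w)
  case Nil thus ?case by simp
next
  case (Cons a w)
  hence "R (foldr (\<circ>) w id s) (a (foldr (\<circ>) w id s))" unfolding R_def by auto
  moreover have "set w \<subseteq> L" using Cons.prems by simp
  ultimately have "R\<^sup>*\<^sup>* s (a (foldr (\<circ>) w id s))"
    using rtranclp.rtrancl_into_rtrancl[OF Cons.IH] by blast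
  moreover have eq: "foldr (\<circ>) (a # w) id s = a (foldr (\<circ>) w id s)" by simp
  ultimately show ?case by (simp only: eq)
qed

lemma level_count:
  assumes trans: "\<forall>m s t. length s = m \<and> length t = m \<longrightarrow> (\<exists>g\<in>G. g s = t)"
    and s: "length s = m" and g: "g \<in> rist G s" "g \<noteq> id" and wl: "word_length S g \<le> l"
  shows "2 ^ (2 ^ m) \<le> card (pr_ball G k (T id id) (l + 6 * 2 ^ m))"
proof -
  have gG: "g \<in> G" using g unfolding rist_def by blast
  have ex: "\<exists>k w. length w = k \<and> set w \<subseteq> set S \<union> inv ` set S \<and> foldr (\<circ>) w id = g"
    using word_exists[OF gG] unfolding L_def by blast
  have "\<exists>w. length w = word_length S g \<and> set w \<subseteq> set S \<union> inv ` set S \<and> foldr (\<circ>) w id = g"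
    unfolding word_length_def by (rule LeastI_ex[OF ex])
  then obtain w where w: "length w = word_length S g" "set w \<subseteq> L" "foldr (\<circ>) w id = g"
    unfolding L_def by blast
  have step1: "wthn (word_length S g) (T id id) (T id g)"
    using build_word[OF G_id G_id w(2)] w by simp
  define V where "V = {t :: bool list. length t = m}"
  have finV: "finite V" unfolding V_def using finite_lists_length_eq[of "UNIV :: bool set" m] by simp
  have cardV: "card V = 2 ^ m" unfolding V_def using card_lists_length_eq[of "UNIV :: bool set" m] by simp
  have symR: "R b a" if Rab: "R a b" for a b
  proof -
    obtain c where c: "c \<in> L" "b = c a" using Rab unfolding R_def by blast
    have "a = inv c b" using c(2) ta_inv_cancel2[OF G_aut[OF L_G[OF c(1)]]] by simp
    thus ?thesis using L_inv[OF c(1)] unfolding R_def by blast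
  qed
  have clR: "b \<in> V" if ab: "a \<in> V" "R a b" for a b
  proof -
    obtain c where c: "c \<in> L" "b = c a" using ab(2) unfolding R_def by blast
    thus ?thesis using ab(1) ta_len[OF G_aut[OF L_G[OF c(1)]]] unfolding V_def by simp
  qed
  have conn: "R\<^sup>*\<^sup>* s t" if "t \<in> V" for t
  proof -
    have "length t = m" using that unfolding V_def by simp
    then obtain h where h: "h \<in> G" "h s = t" using trans[rule_format, of s m t] s by blast
    obtain wh where wh: "set wh \<subseteq> L" "foldr (\<circ>) wh id = h" using word_exists[OF h(1)] by blast
    have "R\<^sup>*\<^sup>* s (foldr (\<circ>) wh id s)" by (rule word_reach[OF wh(1)])
    thus ?thesis unfolding wh(2) h(2) .
  qed
  have sV: "s \<in> V" using s unfolding V_def by simp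
  have "\<exists>ws. successively R (s # ws) \<and> set (s # ws) = V \<and> length ws \<le> 2 * (card V - 1)"
    by (rule walk_exists[OF finV sV]) (fact symR, fact clR, fact conn)
  then obtain ws where ws: "successively R (s # ws)" "set (s # ws) = V" "length ws \<le> 2 * (card V - 1)"
    by blast
  have p1: "(1::nat) \<le> 2 ^ m" by simp
  have "length ws \<le> 2 * 2 ^ m - 2" using ws(3) cardV by (simp add: right_diff_distrib')
  hence lenws: "3 * length ws + 1 \<le> 6 * 2 ^ m" using p1 by linarith
  define ball where "ball = pr_ball G k (T id id) (l + 6 * 2 ^ m)"
  have reachA: "\<exists>u. u \<in> ball \<and> (\<exists>x' y'. u = T x' y' \<and> good m x' A)" if "A \<subseteq> V" for A
  proof -
    obtain x' y' where xy: "wthn (3 * length ws + 1) (T id g) (T x' y')"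
        "good m x' ({} \<union> (A \<inter> set (s # ws)))"
      using process[OF ws(1) good_id g s, of A] by blast
    have "A \<inter> set (s # ws) = A" using ws(2) that by auto
    hence gx: "good m x' A" using xy(2) by simp
    have "wthn (word_length S g + (3 * length ws + 1)) (T id id) (T x' y')"
      by (rule wthn_trans[OF step1 xy(1)])
    hence "wthn (l + 6 * 2 ^ m) (T id id) (T x' y')"
      by (rule wthn_mono) (use wl lenws in simp)
    thus ?thesis using gx unfolding ball_def ball_wthn by blast
  qed
  define F where "F A = (SOME u. u \<in> ball \<and> (\<exists>x' y'. u = T x' y' \<and> good m x' A))" for A
  have FA: "F A \<in> ball \<and> (\<exists>x' y'. F A = T x' y' \<and> good m x' A)" if "A \<subseteq> V" for A
    unfolding F_def using someI_ex[OF reachA[OF that]] by blast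
  have inj: "inj_on F (Pow V)"
  proof (rule inj_onI)
    fix A A' assume A: "A \<in> Pow V" "A' \<in> Pow V" "F A = F A'"
    obtain x1 y1 where 1: "F A = T x1 y1" "good m x1 A" using FA A by blast
    obtain x2 y2 where 2: "F A' = T x2 y2" "good m x2 A'" using FA A by blast
    have "T x1 y1 = T x2 y2" using 1(1) 2(1) A(3) by simp
    hence "T x1 y1 ! n = T x2 y2 ! n" by simp
    hence "x1 = x2" by (simp add: T_nth_x)
    hence "\<forall>v. length v = m \<longrightarrow> (v \<in> A \<longleftrightarrow> v \<in> A')" using 1(2) 2(2) unfolding good_def by blast
    thus "A = A'" using A(1,2) unfolding V_def by auto
  qed
  have "card (Pow V) \<le> card ball"
    by (rule card_inj_on_le[OF inj]) (use FA ball_finite ball_def in auto)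
  thus ?thesis using cardV finV unfolding ball_def by (simp add: card_Pow)
qed

end



lemma exists_level:
  fixes C r :: nat
  assumes "0 < C" shows "2 * C \<le> r \<Longrightarrow> \<exists>m\<ge>1. C * 2 ^ m \<le> r \<and> r < C * 2 ^ Suc m"
proof (induction r)
  case 0 thus ?case using assms by simp
next
  case (Suc r)
  show ?case
  proof (cases "2 * C \<le> r")
    case False
    hence "Suc r = 2 * C" using Suc.prems by simp
    thus ?thesis using assms by (intro exI[of _ 1]) simp
  next
    case True
    then obtain m where m: "m \<ge> 1" "C * 2 ^ m \<le> r" "r < C * 2 ^ Suc m" using Suc.IH by blast
    show ?thesis
    proof (cases "Suc r < C * 2 ^ Suc m")
      case True thus ?thesis using m by (intro exI[of _ m]) simp
    next
      case False
      hence e: "Suc r = C * 2 ^ Suc m" using m(3) by simp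
      have "C * 2 ^ Suc m < C * 2 ^ Suc (Suc m)" using assms by simp
      thus ?thesis using e m(1) by (intro exI[of _ "Suc m"]) simp
    qed
  qed
qed

theorem lemma4p1:
  fixes G :: "tree_map set" and S :: "tree_map list" and n :: nat
  assumes "tree_subgroup G"
    and "length S = n"
    and "gen_tuple G S"
    and "\<forall>m s t. length s = m \<and> length t = m \<longrightarrow> (\<exists>g\<in>G. g s = t)"
    and "\<exists>\<alpha>::real. \<forall>m\<ge>1. \<exists>s g. length s = m \<and> g \<in> rist G s \<and> g \<noteq> id
                 \<and> real (word_length S g) \<le> \<alpha> * 2 ^ m"
  shows "\<forall>k\<ge>n + 2. pr_exp_growth G S k"
proof (intro allI impI)
  fix k assume k: "n + 2 \<le> k"
  obtain \<alpha> :: real where \<alpha>: "\<forall>m\<ge>1. \<exists>s g. length s = m \<and> g \<in> rist G s \<and> g \<noteq> id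
                 \<and> real (word_length S g) \<le> \<alpha> * 2 ^ m" using assms(5) by blast
  define a where "a = nat \<lceil>\<alpha>\<rceil>"
  define C where "C = a + 6"
  have Cpos: "0 < C" unfolding C_def by simp
  interpret ctx G S n k using assms(1-3) k by unfold_locales
  have lvl: "2 ^ (2 ^ m) \<le> card (pr_ball G k (T id id) (C * 2 ^ m))" if m: "m \<ge> 1" for m
  proof -
    obtain s g where sg: "length s = m" "g \<in> rist G s" "g \<noteq> id"
      "real (word_length S g) \<le> \<alpha> * 2 ^ m" using \<alpha> m by blast
    have "\<alpha> * 2 ^ m \<le> real a * 2 ^ m" unfolding a_def
      by (intro mult_right_mono) (linarith, simp)
    hence "real (word_length S g) \<le> real a * 2 ^ m" using sg(4) by linarith
    hence "real (word_length S g) \<le> real (a * 2 ^ m)" by simp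
    hence wl: "word_length S g \<le> a * 2 ^ m" by linarith
    have "2 ^ (2 ^ m) \<le> card (pr_ball G k (T id id) (a * 2 ^ m + 6 * 2 ^ m))"
      by (rule level_count[OF assms(4) sg(1-3) wl])
    thus ?thesis unfolding C_def by (simp add: algebra_simps)
  qed
  have v0: "T id id \<in> pr_component G S k"
  proof -
    have "k - n = Suc (Suc (k - n - 2))" using k by simp
    hence "S @ replicate (k - length S) id = T id id" unfolding T_def using assms(2) by simp
    thus ?thesis unfolding pr_component_def by simp
  qed
  define \<beta> :: real where "\<beta> = 2 powr (1 / (2 * real C))"
  have \<beta>1: "\<beta> > 1" unfolding \<beta>_def using Cpos by simp
  have grow: "\<beta> ^ r \<le> real (card (pr_ball G k (T id id) r))" if r: "r \<ge> 2 * C" for r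
  proof -
    obtain m where m: "m \<ge> 1" "C * 2 ^ m \<le> r" "r < C * 2 ^ Suc m"
      using exists_level[OF Cpos r] by blast
    have "card (pr_ball G k (T id id) (C * 2 ^ m)) \<le> card (pr_ball G k (T id id) r)"
      by (rule card_mono[OF ball_finite ball_mono[OF m(2)]])
    hence c: "2 ^ (2 ^ m) \<le> card (pr_ball G k (T id id) r)" using lvl[OF m(1)] by linarith
    have "\<beta> ^ r = 2 powr (real r * (1 / (2 * real C)))" unfolding \<beta>_def by (simp add: powr_power)
    also have "\<dots> \<le> 2 powr (real (2 ^ m))"
    proof -
      have "real r < real C * 2 ^ Suc m" using m(3) by (metis of_nat_less_iff of_nat_mult of_nat_numeral of_nat_power)
      hence "real r * (1 / (2 * real C)) \<le> 2 ^ m" using Cpos by (simp add: field_simps)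
      thus ?thesis by simp
    qed
    also have "\<dots> = 2 ^ (2 ^ m)" by (rule powr_realpow) simp
    also have "\<dots> \<le> real (card (pr_ball G k (T id id) r))" using c by (metis of_nat_le_iff of_nat_numeral of_nat_power)
    finally show ?thesis .
  qed
  show "pr_exp_growth G S k" unfolding pr_exp_growth_def
    using v0 \<beta>1 grow by blast
qed


end
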